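(* Let $R$ be an incline with $|R|\geq 2$. Then $R$ is $k$-simple if and only if $R$ is isomorphic to $R_0$ or to $R_1$, where $R_0$ and $R_1$ are the semirings on $\{0,1\}$ with addition $0+0=0$, $0+1=1+0=1+1=1$, and multiplication: in $R_0$, $xy=0$ for all $x,y$; in $R_1$, $1\cdot 1=1$ and $xy=0$ otherwise.
   Context: A semiring $(R,+,\cdot)$ is a set with two binary operations such that $(R,+)$ is a commutative semigroup, $(R,\cdot)$ is a semigroup, and multiplication distributes over addition from both sides; no zero or identity is assumed. An incline is a semiring with $r+r=r$ for all $r$ and $x+xy=x=x+yx$ for all $x,y\in R$. A zero of $R$ is an element $0$ with $0+r=r$ and $0r=r0=0$ for all $r\in R$. An ideal of $R$ is a nonempty subset $A\subseteq R$ with $a+b\in A$ and $ra,ar\in A$ for all $a,b\in A$, $r\in R$; the trivial ideals are $R$ and, if $R$ has a zero $0$, $\{0\}$. For an ideal $A$, its $k$-closure is $\overline{A}=\{x\in R\mid x+a=b \text{ for some } a,b\in A\}$, and $A$ is a $k$-ideal if $A=\overline{A}$. $R$ is $k$-simple if it has no $k$-ideals other than the trivial ideals. *)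

theory Defs
  imports Main
begin

definition semiring_on :: "'a set \<Rightarrow> ('a \<Rightarrow> 'a \<Rightarrow> 'a) \<Rightarrow> ('a \<Rightarrow> 'a \<Rightarrow> 'a) \<Rightarrow> bool" where
  "semiring_on R add mul \<longleftrightarrow>
     (\<forall>x\<in>R. \<forall>y\<in>R. add x y \<in> R \<and> mul x y \<in> R) \<and>
     (\<forall>x\<in>R. \<forall>y\<in>R. \<forall>z\<in>R. add (add x y) z = add x (add y z)) \<and>
     (\<forall>x\<in>R. \<forall>y\<in>R. add x y = add y x) \<and>
     (\<forall>x\<in>R. \<forall>y\<in>R. \<forall>z\<in>R. mul (mul x y) z = mul x (mul y z)) \<and>
     (\<forall>x\<in>R. \<forall>y\<in>R. \<forall>z\<in>R. mul x (add y z) = add (mul x y) (mul x z)) \<and>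
     (\<forall>x\<in>R. \<forall>y\<in>R. \<forall>z\<in>R. mul (add y z) x = add (mul y x) (mul z x))"

definition incline_on :: "'a set \<Rightarrow> ('a \<Rightarrow> 'a \<Rightarrow> 'a) \<Rightarrow> ('a \<Rightarrow> 'a \<Rightarrow> 'a) \<Rightarrow> bool" where
  "incline_on R add mul \<longleftrightarrow> semiring_on R add mul \<and>
     (\<forall>r\<in>R. add r r = r) \<and>
     (\<forall>x\<in>R. \<forall>y\<in>R. add x (mul x y) = x \<and> add x (mul y x) = x)"

definition is_zero :: "'a set \<Rightarrow> ('a \<Rightarrow> 'a \<Rightarrow> 'a) \<Rightarrow> ('a \<Rightarrow> 'a \<Rightarrow> 'a) \<Rightarrow> 'a \<Rightarrow> bool" where
  "is_zero R add mul z \<longleftrightarrow> z \<in> R \<and>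
     (\<forall>r\<in>R. add z r = r \<and> mul z r = z \<and> mul r z = z)"

definition ideal_on :: "'a set \<Rightarrow> ('a \<Rightarrow> 'a \<Rightarrow> 'a) \<Rightarrow> ('a \<Rightarrow> 'a \<Rightarrow> 'a) \<Rightarrow> 'a set \<Rightarrow> bool" where
  "ideal_on R add mul A \<longleftrightarrow> A \<subseteq> R \<and> A \<noteq> {} \<and>
     (\<forall>a\<in>A. \<forall>b\<in>A. add a b \<in> A) \<and>
     (\<forall>a\<in>A. \<forall>r\<in>R. mul r a \<in> A \<and> mul a r \<in> A)"

definition k_closure :: "'a set \<Rightarrow> ('a \<Rightarrow> 'a \<Rightarrow> 'a) \<Rightarrow> 'a set \<Rightarrow> 'a set" where
  "k_closure R add A = {x \<in> R. \<exists>a\<in>A. \<exists>b\<in>A. add x a = b}"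

definition k_ideal :: "'a set \<Rightarrow> ('a \<Rightarrow> 'a \<Rightarrow> 'a) \<Rightarrow> ('a \<Rightarrow> 'a \<Rightarrow> 'a) \<Rightarrow> 'a set \<Rightarrow> bool" where
  "k_ideal R add mul A \<longleftrightarrow> ideal_on R add mul A \<and> A = k_closure R add A"

definition trivial_ideal :: "'a set \<Rightarrow> ('a \<Rightarrow> 'a \<Rightarrow> 'a) \<Rightarrow> ('a \<Rightarrow> 'a \<Rightarrow> 'a) \<Rightarrow> 'a set \<Rightarrow> bool" where
  "trivial_ideal R add mul A \<longleftrightarrow> A = R \<or> (\<exists>z. is_zero R add mul z \<and> A = {z})"

definition k_simple :: "'a set \<Rightarrow> ('a \<Rightarrow> 'a \<Rightarrow> 'a) \<Rightarrow> ('a \<Rightarrow> 'a \<Rightarrow> 'a) \<Rightarrow> bool" where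
  "k_simple R add mul \<longleftrightarrow> (\<forall>A. k_ideal R add mul A \<longrightarrow> trivial_ideal R add mul A)"

definition semiring_iso ::
  "'a set \<Rightarrow> ('a \<Rightarrow> 'a \<Rightarrow> 'a) \<Rightarrow> ('a \<Rightarrow> 'a \<Rightarrow> 'a) \<Rightarrow>
   'b set \<Rightarrow> ('b \<Rightarrow> 'b \<Rightarrow> 'b) \<Rightarrow> ('b \<Rightarrow> 'b \<Rightarrow> 'b) \<Rightarrow> ('a \<Rightarrow> 'b) \<Rightarrow> bool" where
  "semiring_iso R add mul S add' mul' f \<longleftrightarrow> bij_betw f R S \<and>
     (\<forall>x\<in>R. \<forall>y\<in>R. f (add x y) = add' (f x) (f y) \<and> f (mul x y) = mul' (f x) (f y))"

definition isomorphic ::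
  "'a set \<Rightarrow> ('a \<Rightarrow> 'a \<Rightarrow> 'a) \<Rightarrow> ('a \<Rightarrow> 'a \<Rightarrow> 'a) \<Rightarrow>
   'b set \<Rightarrow> ('b \<Rightarrow> 'b \<Rightarrow> 'b) \<Rightarrow> ('b \<Rightarrow> 'b \<Rightarrow> 'b) \<Rightarrow> bool" where
  "isomorphic R add mul S add' mul' \<longleftrightarrow> (\<exists>f. semiring_iso R add mul S add' mul' f)"

(* The two-element semirings on {0,1}, with 0 = False, 1 = True *)
definition R01 :: "bool set" where "R01 = {False, True}"
definition add01 :: "bool \<Rightarrow> bool \<Rightarrow> bool" where "add01 x y = (x \<or> y)"
definition mul_R0 :: "bool \<Rightarrow> bool \<Rightarrow> bool" where "mul_R0 x y = False"
definition mul_R1 :: "bool \<Rightarrow> bool \<Rightarrow> bool" where "mul_R1 x y = (x \<and> y)"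

end

theory Submission
  imports Defs
begin

lemma two_elem_iso:
  assumes R: "R = {z, t}" and zt: "z \<noteq> t"
    and zr: "\<And>r. r \<in> R \<Longrightarrow> add z r = r \<and> add r z = r \<and> mul z r = z \<and> mul r z = z"
    and tt: "add t t = t"
    and m: "mul t t = (if bb then t else z)"
    and m': "\<And>x y. mul' x y = (x \<and> y \<and> bb)"
  shows "isomorphic R add mul R01 add01 mul'"
  unfolding isomorphic_def semiring_iso_def
proof (intro exI conjI)
  show "bij_betw (\<lambda>x. x = t) R R01"
    unfolding bij_betw_def inj_on_def R01_def R using zt by auto
  show "\<forall>x\<in>R. \<forall>y\<in>R. (add x y = t) = add01 (x = t) (y = t) \<and> (mul x y = t) = mul' (x = t) (y = t)"
  proof -
    have zR: "z \<in> R" and tR: "t \<in> R" using R by auto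
    show ?thesis unfolding R using zr[OF zR] zr[OF tR] tt m zt
      by (simp add: add01_def m')
  qed
qed

lemma iso_simple:
  assumes "isomorphic R add mul R01 add01 mul'"
    and clos: "\<forall>x\<in>R. \<forall>y\<in>R. add x y \<in> R \<and> mul x y \<in> R"
    and m': "\<And>x. mul' False x = False \<and> mul' x False = False"
  shows "k_simple R add mul"
proof -
  obtain f where bij: "bij_betw f R R01"
    and hom: "\<forall>x\<in>R. \<forall>y\<in>R. f (add x y) = add01 (f x) (f y) \<and> f (mul x y) = mul' (f x) (f y)"
    using assms(1) unfolding isomorphic_def semiring_iso_def by blast
  have inj: "inj_on f R" and img: "f ` R = {False, True}"
    using bij unfolding bij_betw_def R01_def by auto
  obtain z where z: "z \<in> R" "f z = False" using img by (metis imageE insertI1)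
  obtain t where t: "t \<in> R" "f t = True" using img by (metis imageE insertI1 insert_commute)
  have zero: "is_zero R add mul z"
    unfolding is_zero_def
  proof (intro conjI ballI)
    show "z \<in> R" by fact
    fix r assume r: "r \<in> R"
    show "add z r = r" using inj hom clos z r by (auto simp: add01_def inj_on_def)
    show "mul z r = z" using inj hom clos z r m' by (auto simp: inj_on_def)
    show "mul r z = z" using inj hom clos z r m' by (auto simp: inj_on_def)
  qed
  have Rzt: "R = {z, t}"
  proof
    show "R \<subseteq> {z, t}"
    proof
      fix x assume x: "x \<in> R"
      have "f x = f z \<or> f x = f t" using z t by (cases "f x") auto
      thus "x \<in> {z, t}" using inj x z t by (auto simp: inj_on_def)
    qed
  qed (use z t in auto)
  show ?thesis unfolding k_simple_def
  proof (intro allI impI)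
    fix A assume A: "k_ideal R add mul A"
    hence AR: "A \<subseteq> R" and ne: "A \<noteq> {}" and ml: "\<forall>a\<in>A. \<forall>r\<in>R. mul r a \<in> A \<and> mul a r \<in> A"
      unfolding k_ideal_def ideal_on_def by auto
    obtain a where a: "a \<in> A" using ne by blast
    have "mul a z \<in> A" using ml a z by blast
    moreover have "mul a z = z" using zero a AR unfolding is_zero_def by blast
    ultimately have zA: "z \<in> A" by simp
    show "trivial_ideal R add mul A"
      unfolding trivial_ideal_def
    proof (cases "t \<in> A")
      case True thus "A = R \<or> (\<exists>z. is_zero R add mul z \<and> A = {z})" using zA AR Rzt by auto
    next
      case False thus "A = R \<or> (\<exists>z. is_zero R add mul z \<and> A = {z})" using zA AR Rzt zero by auto
    qed
  qed
qed

lemma down_kideal: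
  assumes inc: "incline_on R add mul" and a: "a \<in> R"
  shows "k_ideal R add mul {x\<in>R. add x a = a}"
proof -
  have cl: "\<And>x y. x\<in>R \<Longrightarrow> y\<in>R \<Longrightarrow> add x y \<in> R \<and> mul x y \<in> R"
    and as: "\<And>x y z. x\<in>R \<Longrightarrow> y\<in>R \<Longrightarrow> z\<in>R \<Longrightarrow> add (add x y) z = add x (add y z)"
    and cm: "\<And>x y. x\<in>R \<Longrightarrow> y\<in>R \<Longrightarrow> add x y = add y x"
    and id: "\<And>x. x\<in>R \<Longrightarrow> add x x = x"
    and ab: "\<And>x y. x\<in>R \<Longrightarrow> y\<in>R \<Longrightarrow> add x (mul x y) = x \<and> add x (mul y x) = x"
    using inc unfolding incline_on_def semiring_on_def by blast+
  have le_trans: "add x a = a" if "x \<in> R" "y \<in> R" "add x y = y" "add y a = a" for x y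
    by (metis a as that)
  show ?thesis unfolding k_ideal_def ideal_on_def k_closure_def
  proof (intro conjI)
    show "{x \<in> R. add x a = a} \<noteq> {}" using a id by auto
    show "\<forall>x\<in>{x \<in> R. add x a = a}. \<forall>y\<in>{x \<in> R. add x a = a}. add x y \<in> {x \<in> R. add x a = a}"
      using cl as a by auto
    show "\<forall>x\<in>{x \<in> R. add x a = a}. \<forall>r\<in>R. mul r x \<in> {x \<in> R. add x a = a} \<and> mul x r \<in> {x \<in> R. add x a = a}"
    proof (intro ballI conjI)
      fix x r assume x: "x \<in> {x \<in> R. add x a = a}" and r: "r \<in> R"
      have "add (mul r x) x = x" using ab[of x r] cm cl x r by auto
      thus "mul r x \<in> {x \<in> R. add x a = a}" using le_trans[of "mul r x" x] cl x r by auto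
      have "add (mul x r) x = x" using ab[of x r] cm cl x r by auto
      thus "mul x r \<in> {x \<in> R. add x a = a}" using le_trans[of "mul x r" x] cl x r by auto
    qed
    show "{x \<in> R. add x a = a} = {x \<in> R. \<exists>aa\<in>{x \<in> R. add x a = a}. \<exists>b\<in>{x \<in> R. add x a = a}. add x aa = b}"
    proof (intro set_eqI iffI)
      fix x assume "x \<in> {x \<in> R. add x a = a}"
      thus "x \<in> {x \<in> R. \<exists>aa\<in>{x \<in> R. add x a = a}. \<exists>b\<in>{x \<in> R. add x a = a}. add x aa = b}"
        using a id by auto
    next
      fix x assume "x \<in> {x \<in> R. \<exists>aa\<in>{x \<in> R. add x a = a}. \<exists>b\<in>{x \<in> R. add x a = a}. add x aa = b}"
      then obtain c b where x: "x \<in> R" and c: "c \<in> R" "add c a = a" and b: "b \<in> R" "add b a = a" and e: "add x c = b" by auto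
      have "add x b = b" using e as[of x x c] id x c by metis
      thus "x \<in> {x \<in> R. add x a = a}" using le_trans[of x b] x b by auto
    qed
  qed auto
qed

theorem theorem5p4:
  fixes R :: "'a set" and add mul :: "'a \<Rightarrow> 'a \<Rightarrow> 'a"
  assumes "incline_on R add mul"
    and "\<exists>a\<in>R. \<exists>b\<in>R. a \<noteq> b"
  shows "k_simple R add mul \<longleftrightarrow>
    (isomorphic R add mul R01 add01 mul_R0 \<or> isomorphic R add mul R01 add01 mul_R1)"
proof
  have cl: "\<forall>x\<in>R. \<forall>y\<in>R. add x y \<in> R \<and> mul x y \<in> R"
    and cm: "\<And>x y. x\<in>R \<Longrightarrow> y\<in>R \<Longrightarrow> add x y = add y x"
    and id: "\<And>x. x\<in>R \<Longrightarrow> add x x = x"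
    using assms(1) unfolding incline_on_def semiring_on_def by blast+
  {
    assume "isomorphic R add mul R01 add01 mul_R0 \<or> isomorphic R add mul R01 add01 mul_R1"
    thus "k_simple R add mul"
      using iso_simple[OF _ cl] by (auto simp: mul_R0_def mul_R1_def)
  }
  assume ks: "k_simple R add mul"
  have triv: "\<And>a. a \<in> R \<Longrightarrow> {x\<in>R. add x a = a} = R \<or> (\<exists>z. is_zero R add mul z \<and> {x\<in>R. add x a = a} = {z})"
    using ks down_kideal[OF assms(1)] unfolding k_simple_def trivial_ideal_def by blast
  obtain a b where ab: "a \<in> R" "b \<in> R" "a \<noteq> b" using assms(2) by blast
  have zuniq: "z = z'" if "is_zero R add mul z" "is_zero R add mul z'" for z z'
    using that cm unfolding is_zero_def by metis
  have "\<exists>z. is_zero R add mul z"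
  proof (rule ccontr)
    assume nz: "\<nexists>z. is_zero R add mul z"
    have "add a b = b" using triv[OF ab(2)] nz ab by blast
    moreover have "add b a = a" using triv[OF ab(1)] nz ab by blast
    ultimately show False using cm ab by metis
  qed
  then obtain z where z: "is_zero R add mul z" by blast
  have zR: "z \<in> R" using z unfolding is_zero_def by blast
  have top: "{x\<in>R. add x c = c} = R" if c: "c \<in> R" "c \<noteq> z" for c
  proof -
    have "c \<in> {x\<in>R. add x c = c}" using c id by auto
    thus ?thesis using triv[OF c(1)] zuniq z c by blast
  qed
  obtain t where t: "t \<in> R" "t \<noteq> z" using ab by blast
  have Rzt: "R = {z, t}"
  proof
    show "R \<subseteq> {z, t}"
    proof
      fix x assume x: "x \<in> R"
      show "x \<in> {z, t}"
      proof (cases "x = z")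
        case False
        have "add t x = x" using top[OF x False] t by blast
        moreover have "add x t = t" using top[OF t] x by blast
        ultimately show ?thesis using cm[OF x t(1)] by simp
      qed simp
    qed
  qed (use zR t in auto)
  have zr: "\<And>r. r \<in> R \<Longrightarrow> add z r = r \<and> add r z = r \<and> mul z r = z \<and> mul r z = z"
    using z cm zR unfolding is_zero_def by metis
  have tt: "add t t = t" using id t by blast
  have "mul t t \<in> R" using cl t by blast
  hence "mul t t = z \<or> mul t t = t" using Rzt by blast
  thus "isomorphic R add mul R01 add01 mul_R0 \<or> isomorphic R add mul R01 add01 mul_R1"
  proof
    assume "mul t t = z"
    hence "isomorphic R add mul R01 add01 mul_R0"
      using two_elem_iso[OF Rzt t(2)[symmetric] zr tt, where bb=False] by (simp add: mul_R0_def)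
    thus ?thesis ..
  next
    assume "mul t t = t"
    hence "isomorphic R add mul R01 add01 mul_R1"
      using two_elem_iso[OF Rzt t(2)[symmetric] zr tt, where bb=True] by (simp add: mul_R1_def)
    thus ?thesis ..
  qed
qed

end
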